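(* Let $B$ be an aperiodic Bratteli diagram of rank $d$. (1) $\mu(\mathcal O_B(1))=1$ if and only if there is a strictly increasing sequence $(n_k)_{k\ge1}$ with $\sum_{k=1}^\infty\mu(G_{n_k}^{n_{k+1},1})=\infty$. (2) Let $1<j\le d$. Then $\mu(\mathcal O_B(j))=1$ if and only if there is a strictly increasing sequence $(n_k)$ with $\sum_k\mu(G_{n_k}^{n_{k+1},j})=\infty$ and, for every $1\le i<j$ and every strictly increasing sequence $(m_k)$, $\sum_k\mu(G_{m_k}^{m_{k+1},i})<\infty$.
   Context: A Bratteli diagram $B$ has levels $V_n$ ($V_0=\{v_0\}$, finite) and finite edge sets $E_n$ from $V_{n-1}$ to $V_n$ with source/range maps $s,r$; $X_B$ is its path space; aperiodic means every tail-equivalence class is infinite. Rank $d$: $\sup_n|V_n|<\infty$ and $d$ is the least integer with $|V_n|=d$ infinitely often. An ordering $\omega$ is a linear order on each $r^{-1}(v)$, $v\ne v_0$; $\mathcal O_B=\prod_{v\ne v_0}P_v$ with $\mu=\prod_v\mu_v$, $\mu_v$ uniform on the set $P_v$ of linear orders of $r^{-1}(v)$. $\mathcal O_B(j)$: orderings with exactly $j$ maximal infinite paths (paths all of whose edges are maximal). For $k<n$ and $1\le i\le d$, $G_k^{n,i}$ is the set of orderings $\omega$ such that the $\omega$-maximal finite paths from level $k$ to the vertices of $V_n$ (for each $v\in V_n$, the path from level $k$ to $v$ consisting of maximal edges) have exactly $i$ distinct sources in $V_k$. *)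

theory Defs
  imports "HOL-Probability.Probability"
begin

text \<open>A Bratteli diagram is given by vertex sets V n (n \<ge> 0), edge sets E n (n \<ge> 1)
  of edges from level n-1 to level n, and level-indexed source/range maps s n, r n.
  A vertex is the pair (n,v) with v \<in> V n; an edge of level n is an element of E n.\<close>

definition bratteli ::
  "(nat \<Rightarrow> 'v set) \<Rightarrow> (nat \<Rightarrow> 'e set) \<Rightarrow> (nat \<Rightarrow> 'e \<Rightarrow> 'v) \<Rightarrow> (nat \<Rightarrow> 'e \<Rightarrow> 'v) \<Rightarrow> bool" where
  "bratteli V E s r \<longleftrightarrow>
     card (V 0) = 1 \<and>
     (\<forall>n. finite (V n) \<and> V n \<noteq> {}) \<and>
     (\<forall>n\<ge>1. finite (E n) \<and> (\<forall>e\<in>E n. s n e \<in> V (n - 1) \<and> r n e \<in> V n)) \<and>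
     (\<forall>n\<ge>1. \<forall>v\<in>V n. \<exists>e\<in>E n. r n e = v) \<and>
     (\<forall>n. \<forall>v\<in>V n. \<exists>e\<in>E (Suc n). s (Suc n) e = v)"

text \<open>Infinite paths (x 1, x 2, ...) with x n \<in> E n; the unused entry x 0 is fixed.\<close>
definition path_space ::
  "(nat \<Rightarrow> 'e set) \<Rightarrow> (nat \<Rightarrow> 'e \<Rightarrow> 'v) \<Rightarrow> (nat \<Rightarrow> 'e \<Rightarrow> 'v) \<Rightarrow> (nat \<Rightarrow> 'e) set" where
  "path_space E s r = {x. x 0 = undefined \<and> (\<forall>n\<ge>1. x n \<in> E n \<and> r n (x n) = s (Suc n) (x (Suc n)))}"

definition tail_equiv :: "(nat \<Rightarrow> 'e) \<Rightarrow> (nat \<Rightarrow> 'e) \<Rightarrow> bool" where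
  "tail_equiv x y \<longleftrightarrow> (\<exists>N. \<forall>n\<ge>N. x n = y n)"

definition aperiodic ::
  "(nat \<Rightarrow> 'e set) \<Rightarrow> (nat \<Rightarrow> 'e \<Rightarrow> 'v) \<Rightarrow> (nat \<Rightarrow> 'e \<Rightarrow> 'v) \<Rightarrow> bool" where
  "aperiodic E s r \<longleftrightarrow>
     (\<forall>x\<in>path_space E s r. infinite {y\<in>path_space E s r. tail_equiv x y})"

definition has_rank :: "(nat \<Rightarrow> 'v set) \<Rightarrow> nat \<Rightarrow> bool" where
  "has_rank V d \<longleftrightarrow> (\<exists>M. \<forall>n. card (V n) \<le> M) \<and>
     infinite {n. card (V n) = d} \<and> (\<forall>m<d. finite {n. card (V n) = m})"

definition in_edges :: "(nat \<Rightarrow> 'e set) \<Rightarrow> (nat \<Rightarrow> 'e \<Rightarrow> 'v) \<Rightarrow> nat \<Rightarrow> 'v \<Rightarrow> 'e set" where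
  "in_edges E r n v = {e\<in>E n. r n e = v}"

definition orders_at :: "(nat \<Rightarrow> 'e set) \<Rightarrow> (nat \<Rightarrow> 'e \<Rightarrow> 'v) \<Rightarrow> nat \<Rightarrow> 'v \<Rightarrow> 'e rel set" where
  "orders_at E r n v = {R. linear_order_on (in_edges E r n v) R}"

text \<open>Index set of the vertices different from v0.\<close>
definition vertex_index :: "(nat \<Rightarrow> 'v set) \<Rightarrow> (nat \<times> 'v) set" where
  "vertex_index V = {(n, v). n \<ge> 1 \<and> v \<in> V n}"

definition ordering_measure ::
  "(nat \<Rightarrow> 'v set) \<Rightarrow> (nat \<Rightarrow> 'e set) \<Rightarrow> (nat \<Rightarrow> 'e \<Rightarrow> 'v) \<Rightarrow> (nat \<times> 'v \<Rightarrow> 'e rel) measure" where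
  "ordering_measure V E r =
     PiM (vertex_index V) (\<lambda>(n, v). measure_pmf (pmf_of_set (orders_at E r n v)))"

definition orderings ::
  "(nat \<Rightarrow> 'v set) \<Rightarrow> (nat \<Rightarrow> 'e set) \<Rightarrow> (nat \<Rightarrow> 'e \<Rightarrow> 'v) \<Rightarrow> (nat \<times> 'v \<Rightarrow> 'e rel) set" where
  "orderings V E r = PiE (vertex_index V) (\<lambda>(n, v). orders_at E r n v)"

definition max_edge ::
  "(nat \<Rightarrow> 'e set) \<Rightarrow> (nat \<Rightarrow> 'e \<Rightarrow> 'v) \<Rightarrow> (nat \<times> 'v \<Rightarrow> 'e rel) \<Rightarrow> nat \<Rightarrow> 'e \<Rightarrow> bool" where
  "max_edge E r \<omega> n e \<longleftrightarrow> e \<in> E n \<and>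
     (\<forall>e'\<in>in_edges E r n (r n e). (e', e) \<in> \<omega> (n, r n e))"

definition top_edge ::
  "(nat \<Rightarrow> 'e set) \<Rightarrow> (nat \<Rightarrow> 'e \<Rightarrow> 'v) \<Rightarrow> (nat \<times> 'v \<Rightarrow> 'e rel) \<Rightarrow> nat \<Rightarrow> 'v \<Rightarrow> 'e" where
  "top_edge E r \<omega> n v = (THE e. r n e = v \<and> max_edge E r \<omega> n e)"

fun max_descend ::
  "(nat \<Rightarrow> 'e set) \<Rightarrow> (nat \<Rightarrow> 'e \<Rightarrow> 'v) \<Rightarrow> (nat \<Rightarrow> 'e \<Rightarrow> 'v) \<Rightarrow> (nat \<times> 'v \<Rightarrow> 'e rel)
     \<Rightarrow> nat \<Rightarrow> nat \<Rightarrow> 'v \<Rightarrow> 'v" where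
  "max_descend E s r \<omega> 0 n v = v"
| "max_descend E s r \<omega> (Suc m) n v = max_descend E s r \<omega> m (n - 1) (s n (top_edge E r \<omega> n v))"

definition O_j ::
  "(nat \<Rightarrow> 'v set) \<Rightarrow> (nat \<Rightarrow> 'e set) \<Rightarrow> (nat \<Rightarrow> 'e \<Rightarrow> 'v) \<Rightarrow> (nat \<Rightarrow> 'e \<Rightarrow> 'v) \<Rightarrow> nat
     \<Rightarrow> (nat \<times> 'v \<Rightarrow> 'e rel) set" where
  "O_j V E s r j = {\<omega>\<in>orderings V E r.
     finite {x\<in>path_space E s r. \<forall>n\<ge>1. max_edge E r \<omega> n (x n)} \<and>
     card {x\<in>path_space E s r. \<forall>n\<ge>1. max_edge E r \<omega> n (x n)} = j}"

definition G_set ::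
  "(nat \<Rightarrow> 'v set) \<Rightarrow> (nat \<Rightarrow> 'e set) \<Rightarrow> (nat \<Rightarrow> 'e \<Rightarrow> 'v) \<Rightarrow> (nat \<Rightarrow> 'e \<Rightarrow> 'v)
     \<Rightarrow> nat \<Rightarrow> nat \<Rightarrow> nat \<Rightarrow> (nat \<times> 'v \<Rightarrow> 'e rel) set" where
  "G_set V E s r k n i = {\<omega>\<in>orderings V E r.
     card ((\<lambda>v. max_descend E s r \<omega> (n - k) n v) ` V n) = i}"

end

theory Submission
  imports Defs
begin

lemma lin_max:
  assumes lo: "linear_order_on A R" and "finite F" "F \<noteq> {}" "F \<subseteq> A"
  shows "\<exists>e\<in>F. \<forall>e'\<in>F. (e', e) \<in> R"
  using assms(2,3,4)
proof (induction F rule: finite_ne_induct)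
  case (singleton x) then show ?case using lo
    unfolding linear_order_on_def partial_order_on_def preorder_on_def refl_on_def by auto
next
  case (insert x F)
  then obtain m where m: "m \<in> F" "\<forall>e'\<in>F. (e', m) \<in> R" by auto
  from lo have tr: "trans R" and tot: "total_on A R" and rf: "refl_on A R"
    unfolding linear_order_on_def partial_order_on_def preorder_on_def by auto
  show ?case
  proof (cases "(m, x) \<in> R")
    case True
    have "\<forall>e'\<in>insert x F. (e', x) \<in> R"
    proof
      fix e' assume "e' \<in> insert x F"
      then show "(e', x) \<in> R"
      proof
        assume "e' = x" then show ?thesis using rf insert.prems unfolding refl_on_def by auto
      next
        assume "e' \<in> F" then show ?thesis using m True tr unfolding trans_def by blast
      qed
    qed
    then show ?thesis by auto
  next
    case False
    then have "x \<noteq> m" using rf insert.prems m unfolding refl_on_def by auto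
    then have "(x, m) \<in> R" using tot insert.prems m False unfolding total_on_def by auto
    then show ?thesis using m by auto
  qed
qed

locale brat =
  fixes V :: "nat \<Rightarrow> 'v set" and E :: "nat \<Rightarrow> 'e set" and s r :: "nat \<Rightarrow> 'e \<Rightarrow> 'v"
    and Mb :: nat
  assumes B: "bratteli V E s r"
    and Mb: "\<And>n. card (V n) \<le> Mb"
begin

lemma finV: "finite (V n)" and neV: "V n \<noteq> {}"
  using B unfolding bratteli_def by auto
lemma finE: "n \<ge> 1 \<Longrightarrow> finite (E n)"
  using B unfolding bratteli_def by auto
lemma sE: "n \<ge> 1 \<Longrightarrow> e \<in> E n \<Longrightarrow> s n e \<in> V (n - 1)"
  using B unfolding bratteli_def by auto
lemma rE: "n \<ge> 1 \<Longrightarrow> e \<in> E n \<Longrightarrow> r n e \<in> V n"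
  using B unfolding bratteli_def by auto
lemma inE: "n \<ge> 1 \<Longrightarrow> v \<in> V n \<Longrightarrow> \<exists>e\<in>E n. r n e = v"
  using B unfolding bratteli_def by auto

definition Ord where "Ord = orderings V E r"

lemma Ord_at: "\<omega> \<in> Ord \<Longrightarrow> n \<ge> 1 \<Longrightarrow> v \<in> V n \<Longrightarrow> linear_order_on (in_edges E r n v) (\<omega> (n, v))"
  unfolding Ord_def orderings_def
  by (drule PiE_mem[where x="(n,v)"]) (auto simp: vertex_index_def orders_at_def)

lemma max_unique:
  assumes "\<omega> \<in> Ord" "n \<ge> 1" "r n e1 = r n e2" "max_edge E r \<omega> n e1" "max_edge E r \<omega> n e2"
  shows "e1 = e2"
proof -
  let ?v = "r n e1"
  have e: "e1 \<in> E n" "e2 \<in> E n" using assms unfolding max_edge_def by auto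
  have v: "?v \<in> V n" using rE[OF assms(2) e(1)] .
  have lo: "linear_order_on (in_edges E r n ?v) (\<omega> (n, ?v))" using Ord_at assms(1,2) v by auto
  have "(e2, e1) \<in> \<omega> (n, ?v)" using assms(4) e assms(3) unfolding max_edge_def in_edges_def by auto
  moreover have "(e1, e2) \<in> \<omega> (n, ?v)" using assms(5) e assms(3) unfolding max_edge_def in_edges_def by auto
  ultimately show ?thesis using lo unfolding linear_order_on_def partial_order_on_def antisym_def by auto
qed

lemma top_ex:
  assumes "\<omega> \<in> Ord" "n \<ge> 1" "v \<in> V n"
  shows "\<exists>e. r n e = v \<and> max_edge E r \<omega> n e"
proof -
  have lo: "linear_order_on (in_edges E r n v) (\<omega> (n, v))" using Ord_at assms by auto
  have fin: "finite (in_edges E r n v)" using finE[OF assms(2)] unfolding in_edges_def by auto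
  have ne: "in_edges E r n v \<noteq> {}" using inE[OF assms(2,3)] unfolding in_edges_def by auto
  obtain e where e: "e \<in> in_edges E r n v" "\<forall>e'\<in>in_edges E r n v. (e', e) \<in> \<omega> (n, v)"
    using lin_max[OF lo fin ne] by auto
  then show ?thesis unfolding max_edge_def in_edges_def by auto
qed

lemma top_props:
  assumes "\<omega> \<in> Ord" "n \<ge> 1" "v \<in> V n"
  shows "r n (top_edge E r \<omega> n v) = v \<and> max_edge E r \<omega> n (top_edge E r \<omega> n v)"
proof -
  have "\<exists>!e. r n e = v \<and> max_edge E r \<omega> n e"
    using top_ex[OF assms] max_unique[OF assms(1,2)] by metis
  then show ?thesis unfolding top_edge_def by (rule theI')
qed

lemma top_E: "\<omega> \<in> Ord \<Longrightarrow> n \<ge> 1 \<Longrightarrow> v \<in> V n \<Longrightarrow> top_edge E r \<omega> n v \<in> E n"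
  using top_props unfolding max_edge_def by blast

lemma top_unique:
  assumes "\<omega> \<in> Ord" "n \<ge> 1" "max_edge E r \<omega> n e"
  shows "top_edge E r \<omega> n (r n e) = e"
proof -
  have "e \<in> E n" using assms(3) unfolding max_edge_def by auto
  then have "r n e \<in> V n" using rE assms(2) by auto
  then show ?thesis using top_props[OF assms(1,2)] max_unique[OF assms(1,2)] assms(3) by metis
qed

lemma top_cong:
  assumes "\<omega> (n, v) = \<omega>' (n, v)"
  shows "top_edge E r \<omega> n v = top_edge E r \<omega>' n v"
proof -
  have "\<And>e. (r n e = v \<and> max_edge E r \<omega> n e) = (r n e = v \<and> max_edge E r \<omega>' n e)"
    unfolding max_edge_def using assms by auto
  then show ?thesis unfolding top_edge_def by simp
qed

abbreviation desc where "desc \<omega> \<equiv> max_descend E s r \<omega>"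

lemma desc_in: "\<omega> \<in> Ord \<Longrightarrow> v \<in> V n \<Longrightarrow> m \<le> n \<Longrightarrow> desc \<omega> m n v \<in> V (n - m)"
proof (induction m arbitrary: n v)
  case 0 then show ?case by simp
next
  case (Suc m)
  have n1: "n \<ge> 1" using Suc by auto
  have "s n (top_edge E r \<omega> n v) \<in> V (n - 1)" using sE[OF n1 top_E[OF Suc.prems(1) n1 Suc.prems(2)]] .
  from Suc.IH[OF Suc.prems(1) this] Suc.prems show ?case by simp
qed

lemma desc_add: "desc \<omega> (a + b) n v = desc \<omega> b (n - a) (desc \<omega> a n v)"
proof (induction a arbitrary: n v)
  case 0 then show ?case by simp
next
  case (Suc a)
  show ?case using Suc.IH[of "n - 1"] by (simp add: diff_diff_add)
qed

lemma desc1: "desc \<omega> (Suc 0) n v = s n (top_edge E r \<omega> n v)" by simp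

definition Sset where "Sset \<omega> k n = (\<lambda>v. desc \<omega> (n - k) n v) ` V n"

lemma Sset_sub: "\<omega> \<in> Ord \<Longrightarrow> k \<le> n \<Longrightarrow> Sset \<omega> k n \<subseteq> V k"
proof
  fix u assume "\<omega> \<in> Ord" "k \<le> n" "u \<in> Sset \<omega> k n"
  then obtain v where "v \<in> V n" "u = desc \<omega> (n - k) n v" unfolding Sset_def by auto
  then show "u \<in> V k" using desc_in[of \<omega> v n "n - k"] \<open>\<omega> \<in> Ord\<close> \<open>k \<le> n\<close> by simp
qed

lemma Sset_ne: "Sset \<omega> k n \<noteq> {}" unfolding Sset_def using neV by auto
lemma Sset_fin: "finite (Sset \<omega> k n)" unfolding Sset_def using finV by auto
lemma card_S_ge1: "1 \<le> card (Sset \<omega> k n)"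
  using Sset_ne Sset_fin by (simp add: Suc_le_eq card_gt_0_iff)

lemma Sset_Suc: assumes "\<omega> \<in> Ord" "k \<le> n" shows "Sset \<omega> k (Suc n) \<subseteq> Sset \<omega> k n"
proof
  fix u assume "u \<in> Sset \<omega> k (Suc n)"
  then obtain v where v: "v \<in> V (Suc n)" "u = desc \<omega> (Suc n - k) (Suc n) v" unfolding Sset_def by auto
  have "Suc n - k = 1 + (n - k)" using assms by auto
  then have "u = desc \<omega> (n - k) n (desc \<omega> 1 (Suc n) v)" using v desc_add[of \<omega> 1 "n - k" "Suc n" v] by simp
  moreover have "desc \<omega> 1 (Suc n) v \<in> V n" using desc_in[OF assms(1) v(1), of 1] by simp
  ultimately show "u \<in> Sset \<omega> k n" unfolding Sset_def by auto
qed

lemma Sset_anti: assumes "\<omega> \<in> Ord" "k \<le> n" "n \<le> n'" shows "Sset \<omega> k n' \<subseteq> Sset \<omega> k n"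
  using assms(3)
proof (induction n' rule: dec_induct)
  case base then show ?case by simp
next
  case (step m) then show ?case using Sset_Suc[OF assms(1), of k m] assms(2) by auto
qed

definition Pm where "Pm \<omega> = {x\<in>path_space E s r. \<forall>n\<ge>1. max_edge E r \<omega> n (x n)}"
definition vert :: "(nat \<Rightarrow> 'e) \<Rightarrow> nat \<Rightarrow> 'v" where "vert x n = s (Suc n) (x (Suc n))"

lemma path_E: "x \<in> path_space E s r \<Longrightarrow> n \<ge> 1 \<Longrightarrow> x n \<in> E n \<and> r n (x n) = vert x n"
  unfolding path_space_def vert_def by auto

lemma vert_V: "x \<in> path_space E s r \<Longrightarrow> vert x n \<in> V n"
  using path_E[of x "Suc n"] sE[of "Suc n" "x (Suc n)"] unfolding vert_def by auto

lemma Pm_top: "\<omega> \<in> Ord \<Longrightarrow> x \<in> Pm \<omega> \<Longrightarrow> n \<ge> 1 \<Longrightarrow> x n = top_edge E r \<omega> n (vert x n)"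
  using top_unique[of \<omega> n "x n"] path_E[of x n] unfolding Pm_def by auto

lemma Pm_desc1: assumes "\<omega> \<in> Ord" "x \<in> Pm \<omega>" "n \<ge> 1"
  shows "desc \<omega> (Suc 0) n (vert x n) = vert x (n - 1)"
proof -
  have "desc \<omega> (Suc 0) n (vert x n) = s n (x n)" using Pm_top[OF assms] by simp
  also have "\<dots> = vert x (n - 1)" using assms(3) unfolding vert_def by simp
  finally show ?thesis .
qed

lemma Pm_desc: assumes "\<omega> \<in> Ord" "x \<in> Pm \<omega>"
  shows "m \<le> n \<Longrightarrow> desc \<omega> m n (vert x n) = vert x (n - m)"
proof (induction m)
  case 0 then show ?case by simp
next
  case (Suc m)
  have "desc \<omega> (m + Suc 0) n (vert x n) = desc \<omega> (Suc 0) (n - m) (desc \<omega> m n (vert x n))"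
    by (rule desc_add)
  also have "\<dots> = desc \<omega> (Suc 0) (n - m) (vert x (n - m))" using Suc by simp
  also have "\<dots> = vert x (n - Suc m)" using Pm_desc1[OF assms, of "n - m"] Suc.prems by simp
  finally show ?case by simp
qed

lemma Pm_agree: assumes "\<omega> \<in> Ord" "x \<in> Pm \<omega>" "y \<in> Pm \<omega>" "vert x n = vert y n" "m \<le> n"
  shows "vert x m = vert y m"
  using Pm_desc[OF assms(1,2), of "n - m" n] Pm_desc[OF assms(1,3), of "n - m" n] assms(4,5) by simp

lemma Pm_eq: assumes "\<omega> \<in> Ord" "x \<in> Pm \<omega>" "y \<in> Pm \<omega>" "\<forall>n. vert x n = vert y n"
  shows "x = y"
proof
  fix n show "x n = y n"
  proof (cases "n = 0")
    case True then show ?thesis using assms(2,3) unfolding Pm_def path_space_def by auto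
  next
    case False then show ?thesis using Pm_top[OF assms(1,2), of n] Pm_top[OF assms(1,3), of n] assms(4) by auto
  qed
qed

lemma Pm_sep: assumes "\<omega> \<in> Ord" "x \<in> Pm \<omega>" "y \<in> Pm \<omega>" "x \<noteq> y"
  shows "\<exists>l. \<forall>n\<ge>l. vert x n \<noteq> vert y n"
proof -
  obtain l where l: "vert x l \<noteq> vert y l" using Pm_eq[OF assms(1-3)] assms(4) by blast
  show ?thesis using Pm_agree[OF assms(1-3)] l by (intro exI[of _ l]) blast
qed

definition Tset where "Tset \<omega> k = (\<lambda>x. vert x k) ` Pm \<omega>"

lemma T_sub_V: "Tset \<omega> k \<subseteq> V k" unfolding Tset_def Pm_def using vert_V by auto
lemma T_fin: "finite (Tset \<omega> k)" using T_sub_V finV finite_subset by metis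

lemma T_sub_S: assumes "\<omega> \<in> Ord" "k \<le> n" shows "Tset \<omega> k \<subseteq> Sset \<omega> k n"
proof
  fix u assume "u \<in> Tset \<omega> k"
  then obtain x where x: "x \<in> Pm \<omega>" "u = vert x k" unfolding Tset_def by auto
  have "u = desc \<omega> (n - k) n (vert x n)" using Pm_desc[OF assms(1) x(1), of "n - k" n] x assms by simp
  moreover have "vert x n \<in> V n" using vert_V x unfolding Pm_def by auto
  ultimately show "u \<in> Sset \<omega> k n" unfolding Sset_def by auto
qed

lemma T_Suc: assumes "\<omega> \<in> Ord" shows "Tset \<omega> k = (\<lambda>u. desc \<omega> (Suc 0) (Suc k) u) ` Tset \<omega> (Suc k)"
  unfolding Tset_def image_image using Pm_desc1[OF assms, of _ "Suc k"] by (auto intro!: image_cong)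

lemma card_T_Suc: "\<omega> \<in> Ord \<Longrightarrow> card (Tset \<omega> k) \<le> card (Tset \<omega> (Suc k))"
  using T_Suc[of \<omega> k] card_image_le[OF T_fin] by metis

lemma card_T_mono: assumes "\<omega> \<in> Ord" "k \<le> k'" shows "card (Tset \<omega> k) \<le> card (Tset \<omega> k')"
  using assms(2)
proof (induction k' rule: dec_induct)
  case base then show ?case by simp
next
  case (step m) then show ?case using card_T_Suc[OF assms(1), of m] by auto
qed

end

context brat
begin

definition good where "good \<omega> m u \<longleftrightarrow> u \<in> V m \<and> (\<forall>n\<ge>m. u \<in> Sset \<omega> m n)"

lemma good_step:
  assumes O: "\<omega> \<in> Ord" and g: "good \<omega> m u"
  shows "\<exists>w. good \<omega> (Suc m) w \<and> desc \<omega> (Suc 0) (Suc m) w = u"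
proof (rule ccontr)
  assume H: "\<not> ?thesis"
  define W where "W = {w \<in> V (Suc m). desc \<omega> (Suc 0) (Suc m) w = u}"
  have "\<forall>w\<in>W. \<exists>n. n \<ge> Suc m \<and> w \<notin> Sset \<omega> (Suc m) n"
    using H unfolding W_def good_def by auto
  from bchoice[OF this] obtain f where f0: "\<forall>w\<in>W. f w \<ge> Suc m \<and> w \<notin> Sset \<omega> (Suc m) (f w)"
    by blast
  then have f: "\<And>w. w \<in> W \<Longrightarrow> f w \<ge> Suc m \<and> w \<notin> Sset \<omega> (Suc m) (f w)" by blast
  have finW: "finite W" unfolding W_def using finV by auto
  define N where "N = Max (insert (Suc m) (f ` W))"
  have N1: "N \<ge> Suc m" unfolding N_def using finW by auto
  have N2: "\<And>w. w \<in> W \<Longrightarrow> f w \<le> N" unfolding N_def using finW by auto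
  have "u \<in> Sset \<omega> m N" using g N1 unfolding good_def by auto
  then obtain z where z: "z \<in> V N" "u = desc \<omega> (N - m) N z" unfolding Sset_def by auto
  define w where "w = desc \<omega> (N - Suc m) N z"
  have wV: "w \<in> V (Suc m)" using desc_in[OF O z(1), of "N - Suc m"] N1 unfolding w_def by simp
  have a: "(N - Suc m) + Suc 0 = N - m" "N - (N - Suc m) = Suc m" using N1 by auto
  have "desc \<omega> (N - m) N z = desc \<omega> (Suc 0) (Suc m) w"
    using desc_add[of \<omega> "N - Suc m" "Suc 0" N z] by (simp only: a w_def[symmetric])
  then have "desc \<omega> (Suc 0) (Suc m) w = u" using z by simp
  then have wW: "w \<in> W" using wV unfolding W_def by auto
  have "w \<in> Sset \<omega> (Suc m) N" using z(1) unfolding w_def Sset_def by auto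
  then have "w \<in> Sset \<omega> (Suc m) (f w)" using Sset_anti[OF O, of "Suc m" "f w" N] f[OF wW] N2[OF wW] by auto
  then show False using f[OF wW] by auto
qed

lemma koenig:
  assumes O: "\<omega> \<in> Ord" and g: "good \<omega> k v"
  shows "v \<in> Tset \<omega> k"
proof -
  define w where "w = rec_nat v (\<lambda>i wi. SOME w'. good \<omega> (Suc (k + i)) w' \<and> desc \<omega> (Suc 0) (Suc (k + i)) w' = wi)"
  have w0: "w 0 = v" unfolding w_def by simp
  have wS: "w (Suc i) = (SOME w'. good \<omega> (Suc (k + i)) w' \<and> desc \<omega> (Suc 0) (Suc (k + i)) w' = w i)" for i
    unfolding w_def by simp
  have gw: "good \<omega> (k + i) (w i) \<and> (\<forall>j. i = Suc j \<longrightarrow> desc \<omega> (Suc 0) (Suc (k + j)) (w i) = w j)" for i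
  proof (induction i)
    case 0 then show ?case using g w0 by simp
  next
    case (Suc i)
    then have "good \<omega> (k + i) (w i)" by simp
    from someI_ex[OF good_step[OF O this]] show ?case unfolding wS by simp
  qed
  define u where "u n = (if k \<le> n then w (n - k) else desc \<omega> (k - n) k v)" for n
  have uk: "n \<le> k \<Longrightarrow> u n = desc \<omega> (k - n) k v" for n
    unfolding u_def using w0 by auto
  have gV: "v \<in> V k" using g unfolding good_def by auto
  have uV: "u n \<in> V n" for n
  proof (cases "k \<le> n")
    case True then show ?thesis using gw[of "n - k"] unfolding u_def good_def by auto
  next
    case False then show ?thesis using desc_in[OF O gV, of "k - n"] unfolding u_def by auto
  qed
  have uS: "desc \<omega> (Suc 0) (Suc n) (u (Suc n)) = u n" for n
  proof (cases "k \<le> n")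
    case True
    then have "u (Suc n) = w (Suc (n - k))" "Suc (k + (n - k)) = Suc n" unfolding u_def by (auto simp: Suc_diff_le)
    then show ?thesis using gw[of "Suc (n - k)"] True unfolding u_def by auto
  next
    case False
    then have "u (Suc n) = desc \<omega> (k - Suc n) k v" using uk by simp
    moreover have a: "(k - Suc n) + Suc 0 = k - n" "k - (k - Suc n) = Suc n" using False by auto
    moreover have "desc \<omega> (k - n) k v = desc \<omega> (Suc 0) (Suc n) (desc \<omega> (k - Suc n) k v)"
      using desc_add[of \<omega> "k - Suc n" "Suc 0" k v] by (simp only: a)
    ultimately show ?thesis using uk[of n] False by (simp del: max_descend.simps)
  qed
  define x where "x n = (if n = 0 then undefined else top_edge E r \<omega> n (u n))" for n
  have xS: "s (Suc n) (x (Suc n)) = u n" for n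
    using uS[of n] unfolding x_def by simp
  have xp: "x \<in> path_space E s r"
    unfolding path_space_def
  proof (intro CollectI conjI allI impI)
    show "x 0 = undefined" unfolding x_def by simp
    fix n :: nat assume n: "n \<ge> 1"
    show "x n \<in> E n" using top_E[OF O n uV] n unfolding x_def by simp
    show "r n (x n) = s (Suc n) (x (Suc n))" using top_props[OF O n uV] n xS unfolding x_def by simp
  qed
  have xm: "x \<in> Pm \<omega>" unfolding Pm_def using xp top_props[OF O _ uV] by (auto simp: x_def)
  have "vert x k = v" unfolding vert_def xS using uk[of k] by simp
  then show ?thesis using xm unfolding Tset_def by force
qed

lemma T_eq_S:
  assumes O: "\<omega> \<in> Ord"
  shows "\<exists>N\<ge>k. \<forall>n\<ge>N. Sset \<omega> k n = Tset \<omega> k"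
proof -
  obtain N where N: "N \<ge> k" "\<forall>n. n \<ge> k \<longrightarrow> card (Sset \<omega> k N) \<le> card (Sset \<omega> k n)"
    using ex_has_least_nat[where P="\<lambda>n. n \<ge> k" and k=k and m="\<lambda>n. card (Sset \<omega> k n)"] by auto
  have eq: "Sset \<omega> k n = Sset \<omega> k N" if "n \<ge> N" for n
  proof -
    have "Sset \<omega> k n \<subseteq> Sset \<omega> k N" using Sset_anti[OF O N(1) that] .
    moreover have "card (Sset \<omega> k n) = card (Sset \<omega> k N)"
      using N(2)[rule_format, of n] N(1) that card_mono[OF Sset_fin \<open>Sset \<omega> k n \<subseteq> Sset \<omega> k N\<close>] by simp
    ultimately show ?thesis by (rule card_subset_eq[OF Sset_fin])
  qed
  have ST: "Sset \<omega> k N = Tset \<omega> k"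
  proof
    show "Tset \<omega> k \<subseteq> Sset \<omega> k N" using T_sub_S[OF O N(1)] .
    show "Sset \<omega> k N \<subseteq> Tset \<omega> k"
    proof
      fix u assume u: "u \<in> Sset \<omega> k N"
      have "good \<omega> k u" unfolding good_def
      proof (intro conjI allI impI)
        show "u \<in> V k" using Sset_sub[OF O N(1)] u by auto
        fix n assume "n \<ge> k"
        show "u \<in> Sset \<omega> k n"
        proof (cases "n \<le> N")
          case True then show ?thesis using Sset_anti[OF O \<open>n \<ge> k\<close> True] u by auto
        next
          case False then show ?thesis using eq[of n] u by auto
        qed
      qed
      then show "u \<in> Tset \<omega> k" using koenig[OF O] by auto
    qed
  qed
  show ?thesis
  proof (intro exI[of _ N] conjI allI impI)
    show "N \<ge> k" by (rule N(1))
    fix n assume "n \<ge> N"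
    show "Sset \<omega> k n = Tset \<omega> k" using eq[OF \<open>n \<ge> N\<close>] ST by (rule trans)
  qed
qed

lemma T_ne: "\<omega> \<in> Ord \<Longrightarrow> Tset \<omega> k \<noteq> {}"
  using T_eq_S[of \<omega> k] Sset_ne by fastforce

lemma Pm_ne: "\<omega> \<in> Ord \<Longrightarrow> Pm \<omega> \<noteq> {}"
  using T_ne unfolding Tset_def by auto

lemma fin_inj:
  assumes O: "\<omega> \<in> Ord" and F: "finite F" "F \<subseteq> Pm \<omega>"
  shows "\<exists>k0. \<forall>k\<ge>k0. inj_on (\<lambda>x. vert x k) F"
proof -
  define D where "D = {p \<in> F \<times> F. fst p \<noteq> snd p}"
  have "\<forall>p\<in>D. \<exists>l. \<forall>n\<ge>l. vert (fst p) n \<noteq> vert (snd p) n"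
    using Pm_sep[OF O] F unfolding D_def by auto
  from bchoice[OF this] obtain L where L0: "\<forall>p\<in>D. \<forall>n\<ge>L p. vert (fst p) n \<noteq> vert (snd p) n"
    by blast
  then have L: "\<And>p. p \<in> D \<Longrightarrow> \<forall>n\<ge>L p. vert (fst p) n \<noteq> vert (snd p) n" by blast
  have finD: "finite D" unfolding D_def using F by auto
  define k0 where "k0 = Max (insert 0 (L ` D))"
  have Lk: "\<And>p. p \<in> D \<Longrightarrow> L p \<le> k0" unfolding k0_def using finD by auto
  have "\<forall>k\<ge>k0. inj_on (\<lambda>x. vert x k) F"
  proof (intro allI impI inj_onI)
    fix k x y assume k: "k \<ge> k0" and xy: "x \<in> F" "y \<in> F" "vert x k = vert y k"
    show "x = y"
    proof (rule ccontr)
      assume "x \<noteq> y"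
      then have p: "(x, y) \<in> D" using xy unfolding D_def by auto
      have "L (x, y) \<le> k" using Lk[OF p] k by simp
      then show False using L[OF p] xy(3) by auto
    qed
  qed
  then show ?thesis by blast
qed

lemma Pm_fin: assumes O: "\<omega> \<in> Ord" shows "finite (Pm \<omega>)"
proof (rule ccontr)
  assume "infinite (Pm \<omega>)"
  then obtain F where F: "finite F" "F \<subseteq> Pm \<omega>" "card F = Suc Mb"
    using infinite_arbitrarily_large by blast
  obtain k0 where k0: "\<forall>k\<ge>k0. inj_on (\<lambda>x. vert x k) F" using fin_inj[OF O F(1,2)] by blast
  have "card F = card ((\<lambda>x. vert x k0) ` F)" using card_image k0 by fastforce
  also have "\<dots> \<le> card (V k0)" using F(2) vert_V unfolding Pm_def by (intro card_mono finV) auto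
  also have "\<dots> \<le> Mb" by (rule Mb)
  finally show False using F(3) by simp
qed

lemma card_P_T: assumes O: "\<omega> \<in> Ord" shows "\<exists>k0. \<forall>k\<ge>k0. card (Pm \<omega>) = card (Tset \<omega> k)"
proof -
  obtain k0 where k0: "\<forall>k\<ge>k0. inj_on (\<lambda>x. vert x k) (Pm \<omega>)" using fin_inj[OF O Pm_fin[OF O]] by blast
  show ?thesis unfolding Tset_def
  proof (intro exI allI impI)
    fix k assume "k0 \<le> k"
    then show "card (Pm \<omega>) = card ((\<lambda>x. vert x k) ` Pm \<omega>)"
      by (simp add: card_image k0[rule_format, OF \<open>k0 \<le> k\<close>])
  qed
qed

lemma card_T_le_P: "\<omega> \<in> Ord \<Longrightarrow> card (Tset \<omega> k) \<le> card (Pm \<omega>)"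
  unfolding Tset_def using card_image_le Pm_fin by blast

lemma Pm_card_ge1: "\<omega> \<in> Ord \<Longrightarrow> 1 \<le> card (Pm \<omega>)"
  using Pm_fin Pm_ne by (simp add: Suc_le_eq card_gt_0_iff)

lemma evcard: assumes O: "\<omega> \<in> Ord"
  shows "(\<exists>N. \<forall>n\<ge>N. card (Sset \<omega> k n) = j) \<longleftrightarrow> card (Tset \<omega> k) = j"
proof -
  obtain N0 where N0: "\<forall>n\<ge>N0. Sset \<omega> k n = Tset \<omega> k" using T_eq_S[OF O] by blast
  show ?thesis
  proof
    assume "\<exists>N. \<forall>n\<ge>N. card (Sset \<omega> k n) = j"
    then obtain N where NN: "\<forall>n\<ge>N. card (Sset \<omega> k n) = j" by blast
    then show "card (Tset \<omega> k) = j" using N0[rule_format, of "max N N0"] NN[rule_format, of "max N N0"] by simp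
  next
    assume "card (Tset \<omega> k) = j" then show "\<exists>N. \<forall>n\<ge>N. card (Sset \<omega> k n) = j" using N0 by (intro exI[of _ N0]) simp
  qed
qed

lemma Pcard: assumes O: "\<omega> \<in> Ord"
  shows "card (Pm \<omega>) = j \<longleftrightarrow> (\<exists>K. \<forall>k\<ge>K. card (Tset \<omega> k) = j)"
proof -
  obtain k0 where k0: "\<forall>k\<ge>k0. card (Pm \<omega>) = card (Tset \<omega> k)" using card_P_T[OF O] by blast
  show ?thesis
  proof
    assume "card (Pm \<omega>) = j" then show "\<exists>K. \<forall>k\<ge>K. card (Tset \<omega> k) = j" using k0 by (intro exI[of _ k0]) auto
  next
    assume "\<exists>K. \<forall>k\<ge>K. card (Tset \<omega> k) = j"
    then obtain K where KK: "\<forall>k\<ge>K. card (Tset \<omega> k) = j" by blast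
    then show "card (Pm \<omega>) = j" using k0[rule_format, of "max K k0"] KK[rule_format, of "max K k0"] by simp
  qed
qed

lemma F3:
  assumes O: "\<omega> \<in> Ord" and m: "strict_mono m"
    and inf: "\<forall>K. \<exists>k\<ge>K. card (Sset \<omega> (m k) (m (Suc k))) = i"
  shows "card (Pm \<omega>) \<le> i"
proof -
  obtain k0 where k0: "\<forall>k\<ge>k0. card (Pm \<omega>) = card (Tset \<omega> k)" using card_P_T[OF O] by blast
  obtain k where k: "k \<ge> k0" "card (Sset \<omega> (m k) (m (Suc k))) = i" using inf by blast
  have "k \<le> m k" using m by (simp add: strict_mono_imp_increasing)
  have le: "m k \<le> m (Suc k)" using m by (simp add: strict_mono_less_eq)
  have "card (Pm \<omega>) = card (Tset \<omega> (m k))" using k0[rule_format, of "m k"] k(1) \<open>k \<le> m k\<close> by linarith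
  also have "\<dots> \<le> card (Sset \<omega> (m k) (m (Suc k)))" using T_sub_S[OF O le] by (intro card_mono Sset_fin)
  finally show ?thesis using k(2) by simp
qed

lemma Oj_eq: "O_j V E s r j = {\<omega>\<in>Ord. card (Pm \<omega>) = j}"
  unfolding O_j_def Ord_def using Pm_fin unfolding Pm_def Ord_def by auto

lemma G_eq: "G_set V E s r k n i = {\<omega>\<in>Ord. card (Sset \<omega> k n) = i}"
  unfolding G_set_def Ord_def Sset_def by simp

definition blk where "blk k n = {(l, v). k < l \<and> l \<le> n \<and> v \<in> V l}"

lemma desc_cong:
  assumes O: "\<omega> \<in> Ord" "\<omega>' \<in> Ord" and ag: "\<forall>i\<in>blk k n. \<omega> i = \<omega>' i"
  shows "v \<in> V n' \<Longrightarrow> n' \<le> n \<Longrightarrow> k + m \<le> n' \<Longrightarrow> desc \<omega> m n' v = desc \<omega>' m n' v"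
proof (induction m arbitrary: n' v)
  case 0 then show ?case by simp
next
  case (Suc m)
  have n1: "n' \<ge> 1" using Suc by auto
  have "(n', v) \<in> blk k n" using Suc unfolding blk_def by auto
  then have t: "top_edge E r \<omega> n' v = top_edge E r \<omega>' n' v" using ag top_cong[of \<omega> n' v \<omega>'] by blast
  have "s n' (top_edge E r \<omega> n' v) \<in> V (n' - 1)" using sE[OF n1 top_E[OF O(1) n1 Suc.prems(1)]] .
  with Suc.IH[where n'="n' - 1"] Suc.prems show ?case using t by simp
qed

lemma S_cong:
  assumes O: "\<omega> \<in> Ord" "\<omega>' \<in> Ord" and ag: "\<forall>i\<in>blk k n. \<omega> i = \<omega>' i"
  shows "Sset \<omega> k n = Sset \<omega>' k n"
proof (cases "k \<le> n")
  case True then show ?thesis unfolding Sset_def using desc_cong[OF O ag] by (intro image_cong) auto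
next
  case False then show ?thesis unfolding Sset_def by simp
qed

lemma blk_fin: "finite (blk k n)"
proof -
  have "blk k n \<subseteq> Sigma {..n} V" unfolding blk_def by auto
  then show ?thesis using finV by (meson finite_SigmaI finite_atMost finite_subset)
qed

lemma blk_sub: "blk k n \<subseteq> vertex_index V" unfolding blk_def vertex_index_def by auto

end

lemma nonsummable_tail:
  fixes p :: "nat \<Rightarrow> real"
  assumes nn: "\<And>k. 0 \<le> p k" and div: "\<not> summable p"
  shows "\<exists>L>K. (\<Sum>k\<in>{K..<L}. p k) > B"
proof -
  have "\<exists>n. (\<Sum>i<n. p i) > B + (\<Sum>i<K. p i)"
  proof (rule ccontr)
    assume "\<not> ?thesis"
    then have "\<And>n. (\<Sum>i<n. p i) \<le> B + (\<Sum>i<K. p i)" by (simp add: not_less)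
    then have "summable p" by (intro summableI_nonneg_bounded[OF nn]) auto
    with div show False by simp
  qed
  then obtain n where n: "(\<Sum>i<n. p i) > B + (\<Sum>i<K. p i)" by blast
  define L where "L = max n (Suc K)"
  have "(\<Sum>i<n. p i) \<le> (\<Sum>i<L. p i)" unfolding L_def by (intro sum_mono2) (auto simp: nn)
  moreover have "(\<Sum>i<L. p i) = (\<Sum>i<K. p i) + (\<Sum>k\<in>{K..<L}. p k)"
    using sum.atLeastLessThan_concat[of 0 K L p] unfolding L_def by (simp add: atLeast0LessThan)
  ultimately have "(\<Sum>k\<in>{K..<L}. p k) > B" using n by linarith
  moreover have "L > K" unfolding L_def by simp
  ultimately show ?thesis by blast
qed

lemma (in prob_space) bc2:
  fixes X :: "nat \<Rightarrow> 'a \<Rightarrow> 'b" and N :: "nat \<Rightarrow> 'b measure" and A :: "nat \<Rightarrow> 'b set"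
  assumes ind: "indep_vars N X UNIV" and A: "\<And>k. A k \<in> sets (N k)"
    and div: "\<not> summable (\<lambda>k. prob (X k -` A k \<inter> space M))"
  shows "AE \<omega> in M. \<forall>K. \<exists>k\<ge>K. X k \<omega> \<in> A k"
proof -
  have rv: "\<And>k. X k \<in> measurable M (N k)" using ind unfolding indep_vars_def by auto
  define p where "p k = prob (X k -` A k \<inter> space M)" for k
  have pnn: "0 \<le> p k" for k unfolding p_def by simp
  define D where "D k = X k -` (space (N k) - A k) \<inter> space M" for k
  have Dsets: "D k \<in> events" for k unfolding D_def using rv A by (intro measurable_sets) auto
  have Dp: "prob (D k) = 1 - p k" for k
  proof -
    have "D k = space M - (X k -` A k \<inter> space M)"
      unfolding D_def using measurable_space[OF rv[of k]] by auto
    then show ?thesis unfolding p_def using rv A by (simp add: prob_compl measurable_sets)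
  qed
  define C where "C K = (\<Inter>k\<in>{K..}. D k)" for K
  have Csets: "C K \<in> events" for K unfolding C_def using Dsets
    by (intro sets.countable_INT') auto
  have Cb: "prob (C K) \<le> exp (- (\<Sum>k\<in>{K..<L}. p k))" if "L > K" for K L
  proof -
    have "C K \<subseteq> (\<Inter>k\<in>{K..<L}. D k)" unfolding C_def by auto
    then have "prob (C K) \<le> prob (\<Inter>k\<in>{K..<L}. D k)"
      using Csets Dsets that by (intro finite_measure_mono) (auto intro!: sets.finite_INT)
    also have "\<dots> = (\<Prod>k\<in>{K..<L}. prob (D k))"
      unfolding D_def using that A rv by (intro indep_varsD[OF ind]) auto
    also have "\<dots> = (\<Prod>k\<in>{K..<L}. 1 - p k)" using Dp by simp
    also have "\<dots> \<le> (\<Prod>k\<in>{K..<L}. exp (- p k))"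
    proof (intro prod_mono conjI)
      fix k show "0 \<le> 1 - p k" unfolding p_def by simp
      show "1 - p k \<le> exp (- p k)" using exp_ge_add_one_self[of "- p k"] by simp
    qed
    also have "\<dots> = exp (- (\<Sum>k\<in>{K..<L}. p k))" by (simp add: exp_sum[symmetric] sum_negf)
    finally show ?thesis .
  qed
  have C0: "prob (C K) = 0" for K
  proof (rule ccontr)
    assume "prob (C K) \<noteq> 0"
    then have q: "prob (C K) > 0" using measure_nonneg[of M "C K"] by linarith
    obtain L where L: "L > K" "(\<Sum>k\<in>{K..<L}. p k) > - ln (prob (C K))"
      using nonsummable_tail[where p=p and K=K and B="- ln (prob (C K))"] pnn div unfolding p_def by blast
    have "prob (C K) \<le> exp (- (\<Sum>k\<in>{K..<L}. p k))" using Cb[OF L(1)] .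
    also have "\<dots> < exp (ln (prob (C K)))" using L(2) by simp
    also have "\<dots> = prob (C K)" using q by simp
    finally show False by simp
  qed
  have null: "(\<Union>K. C K) \<in> null_sets M"
    using C0 Csets by (intro null_sets_UN) (auto simp: emeasure_eq_measure)
  show ?thesis
  proof (rule AE_I'[OF null])
    show "{\<omega> \<in> space M. \<not> (\<forall>K. \<exists>k\<ge>K. X k \<omega> \<in> A k)} \<subseteq> (\<Union>K. C K)"
    proof
      fix \<omega> assume "\<omega> \<in> {\<omega> \<in> space M. \<not> (\<forall>K. \<exists>k\<ge>K. X k \<omega> \<in> A k)}"
      then obtain K where "\<omega> \<in> space M" "\<forall>k\<ge>K. X k \<omega> \<notin> A k" by auto
      then have "\<omega> \<in> C K" unfolding C_def D_def using measurable_space[OF rv] by auto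
      then show "\<omega> \<in> (\<Union>K. C K)" by auto
    qed
  qed
qed


definition Mi :: "(nat \<Rightarrow> 'e set) \<Rightarrow> (nat \<Rightarrow> 'e \<Rightarrow> 'v) \<Rightarrow> nat \<times> 'v \<Rightarrow> 'e rel measure" where
  "Mi E r = (\<lambda>(n, v). measure_pmf (pmf_of_set (orders_at E r n v)))"

lemma om_def: "ordering_measure V E r = PiM (vertex_index V) (Mi E r)"
  unfolding ordering_measure_def Mi_def ..

lemma Mi_prob: "prob_space (Mi E r i)" by (cases i) (simp add: Mi_def prob_space_measure_pmf)
lemma Mi_sets[simp]: "sets (Mi E r i) = UNIV" by (cases i) (simp add: Mi_def)
lemma Mi_space[simp]: "space (Mi E r i) = UNIV" by (cases i) (simp add: Mi_def)

context brat
begin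

abbreviation "mu \<equiv> PiM (vertex_index V) (Mi E r)"

lemma PPi: "product_prob_space (Mi E r)"
  unfolding product_prob_space_def product_prob_space_axioms_def product_sigma_finite_def
  by (auto intro: Mi_prob prob_space_imp_sigma_finite)

lemma mu_prob: "prob_space mu" by (rule prob_space_PiM) (rule Mi_prob)

lemma space_mu: "space mu = PiE (vertex_index V) (\<lambda>_. UNIV)" by (simp add: space_PiM)

lemma I_countable: "countable (vertex_index V)"
proof -
  have "vertex_index V \<subseteq> Sigma UNIV V" unfolding vertex_index_def by auto
  moreover have "countable (Sigma UNIV V)" using finV by (intro countable_SIGMA) (auto intro: countable_finite)
  ultimately show ?thesis using countable_subset by blast
qed

lemma I_ne: "vertex_index V \<noteq> {}"
  using neV[of 1] unfolding vertex_index_def by auto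

lemma orders_fin: "(n, v) \<in> vertex_index V \<Longrightarrow> finite (orders_at E r n v)"
proof -
  assume "(n, v) \<in> vertex_index V"
  then have n: "n \<ge> 1" unfolding vertex_index_def by auto
  let ?A = "in_edges E r n v"
  have fin: "finite ?A" using finE[OF n] unfolding in_edges_def by auto
  have "orders_at E r n v \<subseteq> Pow (?A \<times> ?A)"
    unfolding orders_at_def linear_order_on_def partial_order_on_def preorder_on_def by auto
  then show ?thesis by (rule finite_subset) (use fin in auto)
qed

lemma orders_ne: "orders_at E r n v \<noteq> {}"
  using well_order_on[of "in_edges E r n v"] unfolding well_order_on_def orders_at_def by auto

definition oa where "oa = (\<lambda>(n, v). orders_at E r n v)"

lemma oa_fin: "i \<in> vertex_index V \<Longrightarrow> finite (oa i)" using orders_fin by (cases i) (auto simp: oa_def)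

lemma Ord_PiE: "Ord = PiE (vertex_index V) oa"
  unfolding Ord_def orderings_def oa_def ..

lemma Ord_eq: "Ord = (\<Inter>i\<in>vertex_index V. {\<omega> \<in> space mu. \<omega> i \<in> oa i})"
proof (rule set_eqI)
  fix \<omega>
  show "\<omega> \<in> Ord \<longleftrightarrow> \<omega> \<in> (\<Inter>i\<in>vertex_index V. {\<omega> \<in> space mu. \<omega> i \<in> oa i})"
    unfolding Ord_PiE space_mu using I_ne by (simp add: PiE_iff) blast
qed

lemma Ord_sub: "Ord \<subseteq> space mu" using Ord_eq I_ne by auto

lemma Ord_sets: "Ord \<in> sets mu"
  unfolding Ord_eq using I_countable I_ne
  by (intro sets.countable_INT') (auto intro!: sets_Collect_single')

lemma AE_Ord: "AE \<omega> in mu. \<omega> \<in> Ord"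
proof -
  interpret PP: product_prob_space "Mi E r" "vertex_index V" by (rule PPi)
  have "AE \<omega> in mu. \<omega> i \<in> oa i" if i: "i \<in> vertex_index V" for i
  proof (rule PP.AE_component[OF i])
    obtain n v where nv: "i = (n, v)" by (cases i)
    have f: "finite (orders_at E r n v)" using orders_fin i nv by auto
    have m: "Mi E r i = measure_pmf (pmf_of_set (orders_at E r n v))" by (simp add: Mi_def nv)
    have o: "oa i = orders_at E r n v" by (simp add: oa_def nv)
    show "AE x in Mi E r i. x \<in> oa i"
      unfolding m o AE_measure_pmf_iff using set_pmf_of_set[OF orders_ne f] by simp
  qed
  then have "AE \<omega> in mu. \<forall>i\<in>vertex_index V. \<omega> i \<in> oa i"
    by (intro AE_ball_countable[THEN iffD2] I_countable) auto
  then show ?thesis using AE_space by eventually_elim (auto simp: Ord_eq)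
qed

lemma prob_Ord: "measure mu Ord = 1"
proof -
  have "measure mu Ord = measure mu (space mu)"
    using AE_Ord Ord_sets by (intro measure_eq_AE) auto
  then show ?thesis using prob_space.prob_space[OF mu_prob] by simp
qed

lemma cyl:
  assumes J: "J \<subseteq> vertex_index V" "finite J" and A: "A \<subseteq> Ord"
    and cl: "\<And>\<omega> \<omega>'. \<omega> \<in> A \<Longrightarrow> \<omega>' \<in> Ord \<Longrightarrow> (\<forall>i\<in>J. \<omega> i = \<omega>' i) \<Longrightarrow> \<omega>' \<in> A"
  shows "(\<lambda>\<omega>. restrict \<omega> J) ` A \<in> sets (PiM J (Mi E r))"
    and "A = Ord \<inter> ((\<lambda>\<omega>. restrict \<omega> J) -` ((\<lambda>\<omega>. restrict \<omega> J) ` A) \<inter> space mu)"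
    and "A \<in> sets mu"
    and "measure mu A = measure mu ((\<lambda>\<omega>. restrict \<omega> J) -` ((\<lambda>\<omega>. restrict \<omega> J) ` A) \<inter> space mu)"
proof -
  let ?f = "\<lambda>\<omega>. restrict \<omega> J"
  let ?Y = "?f ` A"
  have Ysub: "?Y \<subseteq> PiE J oa"
  proof
    fix c assume "c \<in> ?Y"
    then obtain \<omega> where w: "\<omega> \<in> A" "c = restrict \<omega> J" by auto
    then have "\<omega> \<in> PiE (vertex_index V) oa" using A unfolding Ord_PiE by auto
    then have "\<forall>i\<in>J. \<omega> i \<in> oa i" using J(1) by (auto simp: PiE_iff)
    then show "c \<in> PiE J oa" using w by auto
  qed
  have "finite (PiE J oa)" using J oa_fin by (intro finite_PiE) auto
  then have Yfin: "finite ?Y" using Ysub finite_subset by blast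
  have "?Y = (\<Union>c\<in>?Y. PiE J (\<lambda>i. {c i}))"
  proof -
    have "PiE J (\<lambda>i. {c i}) = {c}" if "c \<in> ?Y" for c
    proof -
      from that obtain \<omega> where "c = restrict \<omega> J" by blast
      then show ?thesis by (simp add: PiE_eq_singleton)
    qed
    then show ?thesis by auto
  qed
  also have "\<dots> \<in> sets (PiM J (Mi E r))"
    using Yfin J(2) by (intro sets.finite_UN sets_PiM_I_finite) auto
  finally show Ys: "?Y \<in> sets (PiM J (Mi E r))" .
  have fm: "?f \<in> measurable mu (PiM J (Mi E r))" using J(1) by (rule measurable_restrict_subset)
  show eq: "A = Ord \<inter> (?f -` ?Y \<inter> space mu)"
  proof
    show "A \<subseteq> Ord \<inter> (?f -` ?Y \<inter> space mu)" using A Ord_sub by auto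
    show "Ord \<inter> (?f -` ?Y \<inter> space mu) \<subseteq> A"
    proof
      fix \<omega>' assume "\<omega>' \<in> Ord \<inter> (?f -` ?Y \<inter> space mu)"
      then obtain \<omega> where w: "\<omega> \<in> A" "\<omega>' \<in> Ord" "restrict \<omega>' J = restrict \<omega> J" by auto
      have "\<forall>i\<in>J. \<omega> i = \<omega>' i" using w(3) by (metis restrict_apply')
      then show "\<omega>' \<in> A" using cl w by blast
    qed
  qed
  have pre: "?f -` ?Y \<inter> space mu \<in> sets mu" using measurable_sets[OF fm Ys] .
  show Asets: "A \<in> sets mu" by (subst eq) (intro sets.Int Ord_sets pre)
  show "measure mu A = measure mu (?f -` ?Y \<inter> space mu)"
  proof (rule measure_eq_AE)
    have eqx: "x \<in> A \<longleftrightarrow> x \<in> ?f -` ?Y \<inter> space mu" if "x \<in> Ord" for x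
      using that eq[THEN equalityD1] eq[THEN equalityD2] by blast
    show "AE x in mu. (x \<in> A) = (x \<in> ?f -` ?Y \<inter> space mu)"
      using AE_Ord by eventually_elim (rule eqx)
  qed (use pre Asets in auto)
qed

end

lemma shift_all: "(\<forall>k. Q (K + k)) \<longleftrightarrow> (\<forall>k\<ge>K. Q (k::nat))"
  by (metis le_add1 le_iff_add)

lemma shift_ex_all: "(\<exists>N. \<forall>n. Q (N + n)) \<longleftrightarrow> (\<exists>N. \<forall>n\<ge>N. Q (n::nat))"
  using shift_all by blast

lemma UN_nat_sets: "(\<And>i::nat. A i \<in> sets M) \<Longrightarrow> (\<Union>i. A i) \<in> sets M" by auto
lemma INT_nat_sets: "(\<And>i::nat. A i \<in> sets M) \<Longrightarrow> (\<Inter>i. A i) \<in> sets M"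
  by (rule sets.countable_INT) auto

context brat
begin

lemma G_sub: "G_set V E s r k n i \<subseteq> Ord" by (auto simp: G_eq)

lemma G_cl: "\<omega> \<in> G_set V E s r k n i \<Longrightarrow> \<omega>' \<in> Ord \<Longrightarrow> \<forall>x\<in>blk k n. \<omega> x = \<omega>' x \<Longrightarrow> \<omega>' \<in> G_set V E s r k n i"
  unfolding G_eq using S_cong[of \<omega> \<omega>' k n] by auto

lemma G_cl_all: "\<And>\<omega> \<omega>'. \<omega> \<in> G_set V E s r k n i \<Longrightarrow> \<omega>' \<in> Ord \<Longrightarrow> (\<forall>x\<in>blk k n. \<omega> x = \<omega>' x) \<Longrightarrow> \<omega>' \<in> G_set V E s r k n i"
  by (rule G_cl)

lemma G_cyl:
  "(\<lambda>\<omega>. restrict \<omega> (blk k n)) ` G_set V E s r k n i \<in> sets (PiM (blk k n) (Mi E r))"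
  "G_set V E s r k n i = Ord \<inter> ((\<lambda>\<omega>. restrict \<omega> (blk k n)) -` ((\<lambda>\<omega>. restrict \<omega> (blk k n)) ` G_set V E s r k n i) \<inter> space mu)"
  "G_set V E s r k n i \<in> sets mu"
  "measure mu (G_set V E s r k n i) = measure mu ((\<lambda>\<omega>. restrict \<omega> (blk k n)) -` ((\<lambda>\<omega>. restrict \<omega> (blk k n)) ` G_set V E s r k n i) \<inter> space mu)"
  by (rule cyl(1)[OF blk_sub blk_fin G_sub], erule G_cl, assumption+)
     (rule cyl(2)[OF blk_sub blk_fin G_sub], erule G_cl, assumption+,
      rule cyl(3)[OF blk_sub blk_fin G_sub], erule G_cl, assumption+,
      rule cyl(4)[OF blk_sub blk_fin G_sub], erule G_cl, assumption+)

lemma Gsets: "G_set V E s r k n i \<in> sets mu" by (rule G_cyl(3))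

lemma Oj_rep: "O_j V E s r j = Ord \<inter> (\<Union>K. \<Inter>k. \<Union>N. \<Inter>n. G_set V E s r (K + k) (N + n) j)"
proof (rule set_eqI)
  fix \<omega>
  show "\<omega> \<in> O_j V E s r j \<longleftrightarrow> \<omega> \<in> Ord \<inter> (\<Union>K. \<Inter>k. \<Union>N. \<Inter>n. G_set V E s r (K + k) (N + n) j)"
  proof (cases "\<omega> \<in> Ord")
    case False then show ?thesis by (simp add: Oj_eq)
  next
    case True
    have "\<omega> \<in> O_j V E s r j \<longleftrightarrow> (\<exists>K. \<forall>k\<ge>K. card (Tset \<omega> k) = j)"
      using Pcard[OF True] True by (simp add: Oj_eq)
    also have "\<dots> \<longleftrightarrow> (\<exists>K. \<forall>k\<ge>K. \<exists>N. \<forall>n\<ge>N. card (Sset \<omega> k n) = j)"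
      using evcard[OF True] by simp
    also have "\<dots> \<longleftrightarrow> (\<exists>K. \<forall>k. \<exists>N. \<forall>n. card (Sset \<omega> (K + k) (N + n)) = j)"
    proof -
      have a: "\<And>k. (\<exists>N. \<forall>n. card (Sset \<omega> k (N + n)) = j) \<longleftrightarrow> (\<exists>N. \<forall>n\<ge>N. card (Sset \<omega> k n) = j)"
        by (rule shift_ex_all)
      have b: "\<And>K. (\<forall>k. \<exists>N. \<forall>n\<ge>N. card (Sset \<omega> (K + k) n) = j) \<longleftrightarrow> (\<forall>k\<ge>K. \<exists>N. \<forall>n\<ge>N. card (Sset \<omega> k n) = j)"
        by (rule shift_all)
      show ?thesis by (simp only: a b)
    qed
    also have "\<dots> \<longleftrightarrow> \<omega> \<in> Ord \<inter> (\<Union>K. \<Inter>k. \<Union>N. \<Inter>n. G_set V E s r (K + k) (N + n) j)"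
      using True by (simp add: G_eq)
    finally show ?thesis .
  qed
qed

lemma Oj_sets: "O_j V E s r j \<in> sets mu"
  unfolding Oj_rep by (intro sets.Int Ord_sets UN_nat_sets INT_nat_sets Gsets)

lemma Oj_sub: "O_j V E s r j \<subseteq> Ord" by (auto simp: Oj_eq)

lemma indep_comp: "prob_space.indep_vars mu (Mi E r) (\<lambda>i \<omega>. \<omega> i) (vertex_index V)"
proof -
  interpret PP: product_prob_space "Mi E r" "vertex_index V" by (rule PPi)
  have "distr mu mu (\<lambda>x. \<lambda>i\<in>vertex_index V. x i) = distr mu mu (\<lambda>x. x)"
    by (rule distr_cong) (auto simp: space_PiM)
  then have d1: "distr mu mu (\<lambda>x. \<lambda>i\<in>vertex_index V. x i) = mu" by simp
  have d2: "(\<Pi>\<^sub>M i\<in>vertex_index V. distr mu (Mi E r i) (\<lambda>\<omega>. \<omega> i)) = mu"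
    by (rule PiM_cong) (auto simp: PP.PiM_component)
  show ?thesis
    by (subst PP.indep_vars_iff_distr_eq_PiM'[OF I_ne]) (auto simp: d1 d2)
qed

lemma BCapp:
  assumes m: "strict_mono m"
    and div: "\<not> summable (\<lambda>k. measure mu (G_set V E s r (m k) (m (Suc k)) i))"
  shows "AE \<omega> in mu. \<omega> \<in> Ord \<and> card (Pm \<omega>) \<le> i"
proof -
  interpret MU: prob_space mu by (rule mu_prob)
  define K where "K k = blk (m k) (m (Suc k))" for k
  define Y where "Y k = (\<lambda>\<omega>. restrict \<omega> (K k)) ` G_set V E s r (m k) (m (Suc k)) i" for k
  have disj: "disjoint_family_on K UNIV"
    unfolding disjoint_family_on_def
  proof (intro ballI impI)
    have aux: "K a \<inter> K b = {}" if "a < b" for a b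
    proof -
      have "m (Suc a) \<le> m b" using m that by (simp add: strict_mono_less_eq)
      then show ?thesis unfolding K_def blk_def by auto
    qed
    fix a b :: nat assume "a \<noteq> b"
    then show "K a \<inter> K b = {}" using aux[of a b] aux[of b a] by (cases "a < b") auto
  qed
  have ind: "MU.indep_vars (\<lambda>k. PiM (K k) (Mi E r)) (\<lambda>k \<omega>. restrict \<omega> (K k)) UNIV"
    using MU.indep_vars_restrict[OF indep_comp _ disj] blk_sub unfolding K_def by simp
  have Ysets: "Y k \<in> sets (PiM (K k) (Mi E r))" for k unfolding Y_def K_def by (rule G_cyl(1))
  have pe: "MU.prob ((\<lambda>\<omega>. restrict \<omega> (K k)) -` Y k \<inter> space mu) = measure mu (G_set V E s r (m k) (m (Suc k)) i)" for k
    unfolding Y_def K_def using G_cyl(4) by simp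
  have div': "\<not> summable (\<lambda>k. MU.prob ((\<lambda>\<omega>. restrict \<omega> (K k)) -` Y k \<inter> space mu))"
    using div by (simp add: pe)
  have AE1: "AE \<omega> in mu. \<forall>K0. \<exists>k\<ge>K0. restrict \<omega> (K k) \<in> Y k"
    by (rule MU.bc2[OF ind Ysets div'])
  show ?thesis using AE1 AE_Ord
  proof eventually_elim
    case (elim \<omega>)
    have "\<forall>K0. \<exists>k\<ge>K0. card (Sset \<omega> (m k) (m (Suc k))) = i"
    proof
      fix K0
      obtain k where k: "k \<ge> K0" "restrict \<omega> (K k) \<in> Y k" using elim(1) by blast
      have "\<omega> \<in> G_set V E s r (m k) (m (Suc k)) i"
        using k(2) elim(2) Ord_sub G_cyl(2)[of "m k" "m (Suc k)" i] unfolding Y_def K_def by blast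
      then show "\<exists>k\<ge>K0. card (Sset \<omega> (m k) (m (Suc k))) = i" using k(1) by (auto simp: G_eq)
    qed
    then show ?case using F3[OF elim(2) m] elim(2) by blast
  qed
qed

end

context brat
begin

lemma SEQ:
  assumes pos: "measure mu (O_j V E s r j) > 0"
  shows "\<exists>nk. strict_mono nk \<and> \<not> summable (\<lambda>k. measure mu (G_set V E s r (nk k) (nk (Suc k)) j))"
proof -
  interpret MU: prob_space mu by (rule mu_prob)
  let ?O = "O_j V E s r j"
  define c where "c = measure mu ?O"
  have c0: "c > 0" using pos unfolding c_def .
  define Fs where "Fs k N = ?O \<inter> (\<Inter>n. G_set V E s r k (N + n) j)" for k N
  define H where "H k = (\<Union>N. Fs k N)" for k
  have Fsets: "Fs k N \<in> sets mu" for k N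
    unfolding Fs_def by (intro sets.Int Oj_sets INT_nat_sets Gsets)
  have Hsets: "H k \<in> sets mu" for k unfolding H_def by (intro UN_nat_sets Fsets)
  have Fmem: "\<omega> \<in> Fs k N \<longleftrightarrow> \<omega> \<in> ?O \<and> (\<forall>n\<ge>N. card (Sset \<omega> k n) = j)" for \<omega> k N
  proof -
    have "\<omega> \<in> Fs k N \<longleftrightarrow> \<omega> \<in> ?O \<and> (\<forall>n. card (Sset \<omega> k (N + n)) = j)"
      unfolding Fs_def using Oj_sub by (auto simp: G_eq)
    also have "\<dots> \<longleftrightarrow> \<omega> \<in> ?O \<and> (\<forall>n\<ge>N. card (Sset \<omega> k n) = j)"
      using shift_all[of "\<lambda>n. card (Sset \<omega> k n) = j" N] by simp
    finally show ?thesis .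
  qed
  have Hmem: "\<omega> \<in> H k \<longleftrightarrow> \<omega> \<in> ?O \<and> card (Tset \<omega> k) = j" for \<omega> k
  proof -
    have "\<omega> \<in> H k \<longleftrightarrow> \<omega> \<in> ?O \<and> (\<exists>N. \<forall>n\<ge>N. card (Sset \<omega> k n) = j)"
      unfolding H_def using Fmem by blast
    also have "\<dots> \<longleftrightarrow> \<omega> \<in> ?O \<and> card (Tset \<omega> k) = j"
      using evcard Oj_sub by blast
    finally show ?thesis .
  qed
  have Hinc: "incseq H"
  proof (rule incseq_SucI, rule subsetI)
    fix k \<omega> assume "\<omega> \<in> H k"
    then have w: "\<omega> \<in> ?O" "card (Tset \<omega> k) = j" using Hmem by auto
    have O: "\<omega> \<in> Ord" "card (Pm \<omega>) = j" using w(1) by (auto simp: Oj_eq)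
    have "card (Tset \<omega> (Suc k)) = j"
      using card_T_Suc[OF O(1), of k] card_T_le_P[OF O(1), of "Suc k"] w(2) O(2) by simp
    then show "\<omega> \<in> H (Suc k)" using Hmem w(1) by auto
  qed
  have HU: "(\<Union>k. H k) = ?O"
  proof
    show "(\<Union>k. H k) \<subseteq> ?O" using Hmem by auto
    show "?O \<subseteq> (\<Union>k. H k)"
    proof
      fix \<omega> assume w: "\<omega> \<in> ?O"
      then have O: "\<omega> \<in> Ord" "card (Pm \<omega>) = j" by (auto simp: Oj_eq)
      then obtain K where "\<forall>k\<ge>K. card (Tset \<omega> k) = j" using Pcard by blast
      then have "\<omega> \<in> H K" using Hmem w by auto
      then show "\<omega> \<in> (\<Union>k. H k)" by auto
    qed
  qed
  have lim1: "(\<lambda>k. measure mu (H k)) \<longlonglongrightarrow> c"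
    using MU.finite_Lim_measure_incseq[of H] Hsets Hinc unfolding HU c_def by auto
  have "eventually (\<lambda>k. c / 2 < measure mu (H k)) sequentially"
    by (rule order_tendstoD(1)[OF lim1]) (use c0 in simp)
  then obtain k0 where k0: "\<And>k. k \<ge> k0 \<Longrightarrow> measure mu (H k) > c / 2"
    unfolding eventually_sequentially by blast
  have step: "\<exists>n>L. measure mu (G_set V E s r k n j) > c / 2" if k: "k \<ge> k0" for k L
  proof -
    have Finc: "incseq (Fs k)"
      by (rule incseq_SucI) (auto simp: Fmem)
    have lim2: "(\<lambda>N. measure mu (Fs k N)) \<longlonglongrightarrow> measure mu (H k)"
      using MU.finite_Lim_measure_incseq[of "Fs k"] Fsets Finc unfolding H_def by auto
    have "eventually (\<lambda>N. c / 2 < measure mu (Fs k N)) sequentially"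
      by (rule order_tendstoD(1)[OF lim2]) (use k0[OF k] in simp)
    then obtain N0 where N0: "\<And>N. N \<ge> N0 \<Longrightarrow> measure mu (Fs k N) > c / 2"
      unfolding eventually_sequentially by blast
    define n where "n = max N0 (Suc L)"
    have "Fs k n \<subseteq> G_set V E s r k n j"
      using Oj_sub[of j] by (auto simp: Fmem G_eq)
    then have "measure mu (Fs k n) \<le> measure mu (G_set V E s r k n j)"
      by (intro MU.finite_measure_mono Gsets)
    moreover have "measure mu (Fs k n) > c / 2" using N0 unfolding n_def by simp
    moreover have "n > L" unfolding n_def by simp
    ultimately show ?thesis by force
  qed
  define nk where "nk = rec_nat k0 (\<lambda>_ p. SOME n. n > p \<and> measure mu (G_set V E s r p n j) > c / 2)"
  have nk0: "nk 0 = k0" unfolding nk_def by simp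
  have nkS: "nk (Suc i) = (SOME n. n > nk i \<and> measure mu (G_set V E s r (nk i) n j) > c / 2)" for i
    unfolding nk_def by simp
  have P: "nk i \<ge> k0 \<and> nk (Suc i) > nk i \<and> measure mu (G_set V E s r (nk i) (nk (Suc i)) j) > c / 2" for i
  proof (induction i)
    case 0
    show ?case using someI_ex[OF step[of k0 k0]] unfolding nkS nk0 by simp
  next
    case (Suc i)
    then have g: "nk (Suc i) \<ge> k0" by simp
    show ?case using someI_ex[OF step[OF g, of "nk (Suc i)"]] g unfolding nkS[of "Suc i"] by simp
  qed
  have sm: "strict_mono nk" using P by (simp add: strict_mono_Suc_iff)
  have ns: "\<not> summable (\<lambda>k. measure mu (G_set V E s r (nk k) (nk (Suc k)) j))"
  proof
    assume "summable (\<lambda>k. measure mu (G_set V E s r (nk k) (nk (Suc k)) j))"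
    then have "(\<lambda>k. measure mu (G_set V E s r (nk k) (nk (Suc k)) j)) \<longlonglongrightarrow> 0"
      by (rule summable_LIMSEQ_zero)
    then have "eventually (\<lambda>k. measure mu (G_set V E s r (nk k) (nk (Suc k)) j) < c / 2) sequentially"
      by (rule order_tendstoD(2)) (use c0 in simp)
    then obtain k where "measure mu (G_set V E s r (nk k) (nk (Suc k)) j) < c / 2"
      unfolding eventually_sequentially by blast
    then show False using P[of k] by simp
  qed
  show ?thesis using sm ns by blast
qed

lemma AE_Oj_1: "AE \<omega> in mu. \<omega> \<in> O_j V E s r j \<Longrightarrow> measure mu (O_j V E s r j) = 1"
proof -
  assume a: "AE \<omega> in mu. \<omega> \<in> O_j V E s r j"
  have "measure mu (O_j V E s r j) = measure mu (space mu)"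
    using a Oj_sets by (intro measure_eq_AE) auto
  then show ?thesis using prob_space.prob_space[OF mu_prob] by simp
qed

end

theorem mainTheorem18:
  fixes V :: "nat \<Rightarrow> 'v set" and E :: "nat \<Rightarrow> 'e set"
    and s r :: "nat \<Rightarrow> 'e \<Rightarrow> 'v" and d :: nat
  defines "\<mu> \<equiv> ordering_measure V E r"
  assumes "bratteli V E s r"
    and "aperiodic E s r"
    and "has_rank V d"
  shows "(measure \<mu> (O_j V E s r 1) = 1 \<longleftrightarrow>
            (\<exists>nk::nat \<Rightarrow> nat. strict_mono nk \<and>
               \<not> summable (\<lambda>k. measure \<mu> (G_set V E s r (nk k) (nk (Suc k)) 1))))
       \<and> (\<forall>j. 1 < j \<and> j \<le> d \<longrightarrow>
            (measure \<mu> (O_j V E s r j) = 1 \<longleftrightarrow>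
              (\<exists>nk::nat \<Rightarrow> nat. strict_mono nk \<and>
                 \<not> summable (\<lambda>k. measure \<mu> (G_set V E s r (nk k) (nk (Suc k)) j))) \<and>
              (\<forall>i. 1 \<le> i \<and> i < j \<longrightarrow> (\<forall>mk::nat \<Rightarrow> nat. strict_mono mk \<longrightarrow>
                 summable (\<lambda>k. measure \<mu> (G_set V E s r (mk k) (mk (Suc k)) i))))))"
proof -
  from assms(4) obtain Mb where Mb: "\<And>n. card (V n) \<le> Mb" unfolding has_rank_def by blast
  interpret brat V E s r Mb using assms(2) Mb by unfold_locales auto
  have mu_eq: "\<mu> = PiM (vertex_index V) (Mi E r)" unfolding \<mu>_def om_def ..
  interpret MU: prob_space "PiM (vertex_index V) (Mi E r)" by (rule mu_prob)
  have fwd1: "\<exists>nk::nat \<Rightarrow> nat. strict_mono nk \<and> \<not> summable (\<lambda>k. measure mu (G_set V E s r (nk k) (nk (Suc k)) j))"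
    if "measure mu (O_j V E s r j) = 1" for j
    using SEQ[of j] that by simp
  have bwd: "measure mu (O_j V E s r j) = 1"
    if nk: "strict_mono nk" "\<not> summable (\<lambda>k. measure mu (G_set V E s r (nk k) (nk (Suc k)) j))"
      and z: "\<And>i. 1 \<le> i \<Longrightarrow> i < j \<Longrightarrow> measure mu (O_j V E s r i) = 0" for j nk
  proof -
    have AE1: "AE \<omega> in mu. \<omega> \<in> Ord \<and> card (Pm \<omega>) \<le> j" by (rule BCapp[OF nk])
    have AE2: "AE \<omega> in mu. \<forall>i\<in>{1..<j}. \<omega> \<notin> O_j V E s r i"
    proof (rule AE_finite_allI)
      fix i assume "i \<in> {1..<j}"
      then have "measure mu (O_j V E s r i) = 0" using z by auto
      then have "O_j V E s r i \<in> null_sets mu"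
        using Oj_sets[of i] by (simp add: null_sets_def MU.emeasure_eq_measure)
      then show "AE \<omega> in mu. \<omega> \<notin> O_j V E s r i" by (rule AE_not_in)
    qed simp
    have "AE \<omega> in mu. \<omega> \<in> O_j V E s r j"
      using AE1 AE2
    proof eventually_elim
      case (elim \<omega>)
      have c1: "1 \<le> card (Pm \<omega>)" using Pm_card_ge1 elim(1) by blast
      have "card (Pm \<omega>) \<notin> {1..<j}"
      proof
        assume "card (Pm \<omega>) \<in> {1..<j}"
        moreover have "\<omega> \<in> O_j V E s r (card (Pm \<omega>))" using elim(1) by (simp add: Oj_eq)
        ultimately show False using elim(2) by blast
      qed
      then have "card (Pm \<omega>) = j" using c1 elim(1) by auto
      then show ?case using elim(1) by (simp add: Oj_eq)
    qed
    then show ?thesis by (rule AE_Oj_1)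
  qed
  have zero: "measure mu (O_j V E s r i) = 0"
    if "\<forall>mk::nat \<Rightarrow> nat. strict_mono mk \<longrightarrow> summable (\<lambda>k. measure mu (G_set V E s r (mk k) (mk (Suc k)) i))" for i
  proof (rule ccontr)
    assume "measure mu (O_j V E s r i) \<noteq> 0"
    then have "measure mu (O_j V E s r i) > 0" using measure_nonneg[of mu "O_j V E s r i"] by linarith
    then show False using SEQ[of i] that by blast
  qed
  have fwd2: "summable (\<lambda>k. measure mu (G_set V E s r (mk k) (mk (Suc k)) i))"
    if "i < j" "measure mu (O_j V E s r j) = 1" "strict_mono mk" for i j mk
  proof (rule ccontr)
    assume ns: "\<not> ?thesis"
    have AE1: "AE \<omega> in mu. \<omega> \<in> Ord \<and> card (Pm \<omega>) \<le> i" by (rule BCapp[OF that(3) ns])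
    have AE2: "AE \<omega> in mu. \<omega> \<in> O_j V E s r j" by (rule MU.AE_prob_1[OF that(2)])
    have "AE \<omega> in mu. False" using AE1 AE2
    proof eventually_elim
      case (elim \<omega>) then show ?case using that(1) by (simp add: Oj_eq)
    qed
    then show False by simp
  qed
  show ?thesis unfolding mu_eq
  proof (rule conjI)
    show "measure mu (O_j V E s r 1) = 1 \<longleftrightarrow>
            (\<exists>nk::nat \<Rightarrow> nat. strict_mono nk \<and> \<not> summable (\<lambda>k. measure mu (G_set V E s r (nk k) (nk (Suc k)) 1)))"
    proof (rule iffI)
      assume "measure mu (O_j V E s r 1) = 1"
      then show "\<exists>nk::nat \<Rightarrow> nat. strict_mono nk \<and> \<not> summable (\<lambda>k. measure mu (G_set V E s r (nk k) (nk (Suc k)) 1))"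
        by (rule fwd1)
    next
      assume "\<exists>nk::nat \<Rightarrow> nat. strict_mono nk \<and> \<not> summable (\<lambda>k. measure mu (G_set V E s r (nk k) (nk (Suc k)) 1))"
      then obtain nk where "strict_mono nk" "\<not> summable (\<lambda>k. measure mu (G_set V E s r (nk k) (nk (Suc k)) 1))" by blast
      then show "measure mu (O_j V E s r 1) = 1" by (rule bwd) auto
    qed
    show "\<forall>j. 1 < j \<and> j \<le> d \<longrightarrow>
            (measure mu (O_j V E s r j) = 1 \<longleftrightarrow>
              (\<exists>nk::nat \<Rightarrow> nat. strict_mono nk \<and>
                 \<not> summable (\<lambda>k. measure mu (G_set V E s r (nk k) (nk (Suc k)) j))) \<and>
              (\<forall>i. 1 \<le> i \<and> i < j \<longrightarrow> (\<forall>mk::nat \<Rightarrow> nat. strict_mono mk \<longrightarrow>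
                 summable (\<lambda>k. measure mu (G_set V E s r (mk k) (mk (Suc k)) i)))))"
    proof (intro allI impI)
      fix j :: nat assume j: "1 < j \<and> j \<le> d"
      show "measure mu (O_j V E s r j) = 1 \<longleftrightarrow>
              (\<exists>nk::nat \<Rightarrow> nat. strict_mono nk \<and>
                 \<not> summable (\<lambda>k. measure mu (G_set V E s r (nk k) (nk (Suc k)) j))) \<and>
              (\<forall>i. 1 \<le> i \<and> i < j \<longrightarrow> (\<forall>mk::nat \<Rightarrow> nat. strict_mono mk \<longrightarrow>
                 summable (\<lambda>k. measure mu (G_set V E s r (mk k) (mk (Suc k)) i))))"
      proof (rule iffI)
        assume m: "measure mu (O_j V E s r j) = 1"
        show "(\<exists>nk::nat \<Rightarrow> nat. strict_mono nk \<and> \<not> summable (\<lambda>k. measure mu (G_set V E s r (nk k) (nk (Suc k)) j))) \<and>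
          (\<forall>i. 1 \<le> i \<and> i < j \<longrightarrow> (\<forall>mk::nat \<Rightarrow> nat. strict_mono mk \<longrightarrow>
             summable (\<lambda>k. measure mu (G_set V E s r (mk k) (mk (Suc k)) i))))"
          using fwd1[OF m] fwd2[OF _ m] by blast
      next
        assume h: "(\<exists>nk::nat \<Rightarrow> nat. strict_mono nk \<and> \<not> summable (\<lambda>k. measure mu (G_set V E s r (nk k) (nk (Suc k)) j))) \<and>
          (\<forall>i. 1 \<le> i \<and> i < j \<longrightarrow> (\<forall>mk::nat \<Rightarrow> nat. strict_mono mk \<longrightarrow>
             summable (\<lambda>k. measure mu (G_set V E s r (mk k) (mk (Suc k)) i))))"
        then obtain nk where nk: "strict_mono nk" "\<not> summable (\<lambda>k. measure mu (G_set V E s r (nk k) (nk (Suc k)) j))" by blast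
        show "measure mu (O_j V E s r j) = 1"
        proof (rule bwd[OF nk])
          fix i assume "1 \<le> i" "i < j"
          then show "measure mu (O_j V E s r i) = 0" using h by (intro zero) blast
        qed
      qed
    qed
  qed
qed

end
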